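(* Let $(U,\Phi)$ be a two-phase quantum walk with one defect with an initial state $\Phi\in\mathcal H_0$. Then $(U,\Phi)$ is unitary equivalent to $(U_{r,\mu},\Phi_{\alpha,\theta})$ for some $0\le r_\varepsilon,\alpha\le1$ ($\varepsilon=+,-,0$) and $\mu_i,\theta\in\mathbb R$ ($i=1,2,3$), where $\Phi_{\alpha,\theta}=\alpha e_1^0+e^{i\theta}\sqrt{1-\alpha^2}\,e_2^0$ and \begin{align*} U_{r,\mu}={}&|e_1^{-1}\rangle\langle r_0e_1^0+e^{i\mu_1}s_0e_2^0|+|e_2^{1}\rangle\langle -e^{i\mu_2}s_0e_1^0+e^{i(\mu_1+\mu_2)}r_0e_2^0|\\ &+\sum_{n\ge1}|e_1^{n-1}\rangle\langle r_+e_1^n+s_+e_2^n|+|e_2^{n+1}\rangle\langle -e^{i\mu_3}s_+e_1^n+e^{i\mu_3}r_+e_2^n|\\ &+\sum_{n\le-1}|e_1^{n-1}\rangle\langle r_-e_1^n+s_-e_2^n|+|e_2^{n+1}\rangle\langle -s_-e_1^n+r_-e_2^n|, \end{align*} with $s_\varepsilon=\sqrt{1-r_\varepsilon^2}$, $r=(r_+,r_-,r_0)$, $\mu=(\mu_1,\mu_2,\mu_3)$. Moreover, for $0<r_\varepsilon,r'_\varepsilon,\alpha,\alpha'<1$ and $\mu_i,\mu'_i,\theta,\theta'\in[0,2\pi)$, the pairs $(U_{r,\mu},\Phi_{\alpha,\theta})$ and $(U_{r',\mu'},\Phi_{\alpha',\theta'})$ are unitary equivalent if and only if $r=r'$, $\mu=\mu'$,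 $\alpha=\alpha'$ and $\theta=\theta'$.
   Context: Let $\mathcal H_n=\mathbb C^2$ for $n\in\mathbb Z$, $\mathcal H=\bigoplus_{n\in\mathbb Z}\mathcal H_n$, $P_n$ the orthogonal projection onto $\mathcal H_n$, and $\{e_1^n,e_2^n\}$ the standard basis of $\mathcal H_n$; each $\mathcal H_n$ is identified with $\mathbb C^2$. Dirac notation: $|x\rangle\langle y|$ is the operator $z\mapsto\langle y,z\rangle x$ (inner product conjugate-linear in the first argument). A one-dimensional quantum walk is a unitary $U$ on $\mathcal H$ with $\operatorname{rank}(P_nUP_m)=1$ if $m=n\pm1$ and $0$ otherwise. Every such $U$ can be written as $U=\sum_{n\in\mathbb Z}|\xi_{n-1,n}\rangle\langle\zeta_{n-1,n}|+|\xi_{n+1,n}\rangle\langle\zeta_{n+1,n}|$, where $\{\xi_{n,n+1},\xi_{n+1,n}\}_{n}$ and $\{\zeta_{n,n+1},\zeta_{n+1,n}\}_{n}$ are orthonormal bases of $\mathcal H$ with $\xi_{n,n+1},\zeta_{n+1,n}\in\mathcal H_n$ and $\xi_{n+1,n},\zeta_{n,n+1}\in\mathcal H_{n+1}$. $U$ is a two-phase quantum walk with one defect if it has such a representation for which there exist $\xi_1^\pm,\xi_2^\pm,\zeta_1^\pm,\zeta_2^\pm\in\mathbb C^2$ with $\xi_{n,n+1}=\xi_1^+$, $\xi_{n,n-1}=\xi_2^+$, $\zeta_{n-1,n}=\zeta_1^+$, $\zeta_{n+1,n}=\zeta_2^+$ for all $n\ge1$, and the same with superscript $-$ for all $n\le-1$.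 An initial state is a unit vector $\Phi\in\mathcal H_0$. Since a walk $U$ is identified with $e^{i\lambda}U$ and a state $\Phi$ with $e^{i\lambda}\Phi$ ($\lambda\in\mathbb R$), pairs $(U,\Phi)$ and $(U',\Phi')$ are called unitary equivalent if there exist $\lambda,\lambda'\in\mathbb R$ and a unitary $W=\bigoplus_nW_n$ ($W_n$ unitary on $\mathcal H_n$) with $e^{i\lambda}WUW^*=U'$ and $e^{i\lambda'}W\Phi=\Phi'$. *)

theory Defs
  imports "HOL-Analysis.Analysis"
begin

text \<open>H = (+)_{n in Z} C^2. A (bounded) operator U on H whose blocks
  P_n U P_m vanish unless |n - m| = 1 is determined by its 2x2 blocks.
  We represent such an operator by the block function B with B n m = P_n U P_m
  (as a 2x2 complex matrix). Vectors of H_n are elements of complex^2.\<close>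

type_synonym cvec = "complex^2"
type_synonym cmat = "complex^2^2"
type_synonym blockop = "int \<Rightarrow> int \<Rightarrow> cmat"

definition e1 :: cvec where "e1 = vector [1, 0]"
definition e2 :: cvec where "e2 = vector [0, 1]"

definition cinner :: "cvec \<Rightarrow> cvec \<Rightarrow> complex" where
  "cinner x y = (\<Sum>i\<in>UNIV. cnj (x $ i) * y $ i)"

definition ket_bra :: "cvec \<Rightarrow> cvec \<Rightarrow> cmat" where
  "ket_bra x y = (\<chi> i j. x $ i * cnj (y $ j))"

definition adj :: "cmat \<Rightarrow> cmat" where
  "adj A = (\<chi> i j. cnj (A $ j $ i))"

definition unitary2 :: "cmat \<Rightarrow> bool" where
  "unitary2 W \<longleftrightarrow> W ** adj W = mat 1 \<and> adj W ** W = mat 1"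

definition onb2 :: "cvec \<Rightarrow> cvec \<Rightarrow> bool" where
  "onb2 a b \<longleftrightarrow> cinner a a = 1 \<and> cinner b b = 1 \<and> cinner a b = 0"

text \<open>One-dimensional quantum walk: the operator with blocks B is unitary on H and
  rank (P_n U P_m) = 1 if m = n +- 1 and 0 otherwise. Because of the band structure,
  the entries of U^* U and U U^* are finite sums (only k = n-1, n+1 contribute),
  and the matrix identities U^*U = UU^* = I (with columns of norm one) make the
  banded block matrix a bounded operator, which is then unitary.\<close>
definition quantum_walk :: "blockop \<Rightarrow> bool" where
  "quantum_walk B \<longleftrightarrow>
     (\<forall>n m. rank (B n m) = (if m = n + 1 \<or> m = n - 1 then 1 else 0)) \<and>
     (\<forall>n m. (\<Sum>k\<in>{n - 1, n + 1}. adj (B k n) ** B k m) = (if n = m then mat 1 else 0)) \<and>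
     (\<forall>n m. (\<Sum>k\<in>{n - 1, n + 1}. B n k ** adj (B m k)) = (if n = m then mat 1 else 0))"

text \<open>Representation U = sum_n |xi_{n-1,n}><zeta_{n-1,n}| + |xi_{n+1,n}><zeta_{n+1,n}|.
  Vectors living in H_n:  xr n = xi_{n,n+1},  xl n = xi_{n,n-1},
  zl n = zeta_{n-1,n},  zr n = zeta_{n+1,n}.  So P_{n-1} U P_n = |xr (n-1)><zl n| and
  P_{n+1} U P_n = |xl (n+1)><zr n|.\<close>
definition walk_repr :: "blockop \<Rightarrow> (int \<Rightarrow> cvec) \<Rightarrow> (int \<Rightarrow> cvec) \<Rightarrow> (int \<Rightarrow> cvec) \<Rightarrow> (int \<Rightarrow> cvec) \<Rightarrow> bool" where
  "walk_repr B xr xl zl zr \<longleftrightarrow>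
     (\<forall>n. onb2 (xr n) (xl n) \<and> onb2 (zl n) (zr n)) \<and>
     (\<forall>n m. B n m = (if n = m - 1 then ket_bra (xr n) (zl m)
                      else if n = m + 1 then ket_bra (xl n) (zr m) else 0))"

definition two_phase_one_defect :: "blockop \<Rightarrow> bool" where
  "two_phase_one_defect B \<longleftrightarrow> quantum_walk B \<and>
     (\<exists>xr xl zl zr x1p x2p z1p z2p x1m x2m z1m z2m.
        walk_repr B xr xl zl zr \<and>
        (\<forall>n\<ge>1. xr n = x1p \<and> xl n = x2p \<and> zl n = z1p \<and> zr n = z2p) \<and>
        (\<forall>n\<le>-1. xr n = x1m \<and> xl n = x2m \<and> zl n = z1m \<and> zr n = z2m))"

text \<open>Unitary equivalence of pairs (U, Phi), with W = (+)_n W_n: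
  e^{i l} W U W^* = U'  (blockwise: e^{i l} W_n (P_n U P_m) W_m^* = P_n U' P_m)
  and e^{i l'} W Phi = Phi' (Phi in H_0, so only W_0 acts).\<close>
definition unit_equiv :: "blockop \<Rightarrow> cvec \<Rightarrow> blockop \<Rightarrow> cvec \<Rightarrow> bool" where
  "unit_equiv B \<Phi> B' \<Phi>' \<longleftrightarrow>
     (\<exists>(l::real) (l'::real) (W::int \<Rightarrow> cmat).
        (\<forall>n. unitary2 (W n)) \<and>
        (\<forall>n m. (\<chi> i j. exp (\<i> * of_real l) * (W n ** B n m ** adj (W m)) $ i $ j) = B' n m) \<and>
        (\<chi> i. exp (\<i> * of_real l') * (W 0 *v \<Phi>) $ i) = \<Phi>')"

text \<open>The normal form U_{r,mu}, r = (rp, rm, r0), mu = (m1, m2, m3), s = sqrt(1 - r^2).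
  The term |e_1^{n-1}><v_n| gives block (n-1, n), the term |e_2^{n+1}><w_n| gives block (n+1, n).\<close>
definition Uq_v :: "real \<Rightarrow> real \<Rightarrow> real \<Rightarrow> real \<Rightarrow> int \<Rightarrow> cvec" where
  "Uq_v rp rm r0 m1 n =
     (if n = 0 then vector [complex_of_real r0, exp (\<i> * of_real m1) * of_real (sqrt (1 - r0\<^sup>2))]
      else if n \<ge> 1 then vector [complex_of_real rp, complex_of_real (sqrt (1 - rp\<^sup>2))]
      else vector [complex_of_real rm, complex_of_real (sqrt (1 - rm\<^sup>2))])"

definition Uq_w :: "real \<Rightarrow> real \<Rightarrow> real \<Rightarrow> real \<Rightarrow> real \<Rightarrow> real \<Rightarrow> int \<Rightarrow> cvec" where
  "Uq_w rp rm r0 m1 m2 m3 n =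
     (if n = 0 then vector [- exp (\<i> * of_real m2) * of_real (sqrt (1 - r0\<^sup>2)),
                            exp (\<i> * of_real (m1 + m2)) * of_real r0]
      else if n \<ge> 1 then vector [- exp (\<i> * of_real m3) * of_real (sqrt (1 - rp\<^sup>2)),
                                 exp (\<i> * of_real m3) * of_real rp]
      else vector [- complex_of_real (sqrt (1 - rm\<^sup>2)), complex_of_real rm])"

definition Uq :: "real \<Rightarrow> real \<Rightarrow> real \<Rightarrow> real \<Rightarrow> real \<Rightarrow> real \<Rightarrow> blockop" where
  "Uq rp rm r0 m1 m2 m3 n m =
     (if n = m - 1 then ket_bra e1 (Uq_v rp rm r0 m1 m)
      else if n = m + 1 then ket_bra e2 (Uq_w rp rm r0 m1 m2 m3 m) else 0)"

definition Phiq :: "real \<Rightarrow> real \<Rightarrow> cvec" where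
  "Phiq \<alpha> \<theta> = vector [complex_of_real \<alpha>, exp (\<i> * of_real \<theta>) * of_real (sqrt (1 - \<alpha>\<^sup>2))]"

end

theory Submission
  imports Defs
begin


lemma vec2_eq: "(x::'a^2) = y \<longleftrightarrow> x$1 = y$1 \<and> x$2 = y$2"
  by (simp add: vec_eq_iff forall_2)

lemma cinner2: "cinner x y = cnj (x$1) * y$1 + cnj (x$2) * y$2"
  by (simp add: cinner_def sum_2)

lemma mv1: "((M::complex^2^2) *v x)$1 = M$1$1 * x$1 + M$1$2 * x$2"
  by (simp add: matrix_vector_mult_def sum_2)
lemma mv2: "((M::complex^2^2) *v x)$2 = M$2$1 * x$1 + M$2$2 * x$2"
  by (simp add: matrix_vector_mult_def sum_2)

lemma kb: "ket_bra x y $ i $ j = x$i * cnj (y$j)"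
  by (simp add: ket_bra_def)

lemma mm_kb: "M ** ket_bra x y ** adj N = ket_bra (M *v x) (N *v y)"
  by (simp add: vec_eq_iff forall_2 matrix_matrix_mult_def sum_2 ket_bra_def adj_def
      matrix_vector_mult_def algebra_simps)

lemma perp_num:
  fixes A B C D :: complex
  assumes "cnj A*A + cnj B*B = 1" "cnj C*C + cnj D*D = 1" "cnj A*C + cnj B*D = 0"
  shows "C = -(A*D-B*C)*cnj B" "D = (A*D-B*C)*cnj A" "cnj (A*D-B*C)*(A*D-B*C) = 1"
proof -
  have h3: "cnj C*A + cnj D*B = 0" using arg_cong[OF assms(3), of cnj] by (simp add: mult.commute)
  show c: "C = -(A*D-B*C)*cnj B" using assms h3 by algebra
  show d: "D = (A*D-B*C)*cnj A" using assms h3 by algebra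
  show "cnj (A*D-B*C)*(A*D-B*C) = 1"
  proof -
    define l where "l = A*D-B*C"
    have c': "cnj C = - cnj l * B" using arg_cong[OF c, of cnj] unfolding l_def by simp
    have d': "cnj D = cnj l * A" using arg_cong[OF d, of cnj] unfolding l_def by simp
    have "cnj l * l = 1" using assms c d c' d' unfolding l_def[symmetric] by algebra
    thus ?thesis unfolding l_def .
  qed
qed

lemma two_ne_one: "(2::2) \<noteq> 1" by simp

lemma onb_perp:
  assumes "onb2 x y"
  shows "cnj (x$1*y$2 - x$2*y$1) * (x$1*y$2 - x$2*y$1) = 1"
        "y$1 = -(x$1*y$2 - x$2*y$1) * cnj (x$2)" "y$2 = (x$1*y$2 - x$2*y$1) * cnj (x$1)"
proof -
  have h: "cnj (x$1)*x$1 + cnj (x$2)*x$2 = 1" "cnj (y$1)*y$1 + cnj (y$2)*y$2 = 1"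
     "cnj (x$1)*y$1 + cnj (x$2)*y$2 = 0"
    using assms by (auto simp: onb2_def cinner2)
  show "cnj (x$1*y$2 - x$2*y$1) * (x$1*y$2 - x$2*y$1) = 1"
        "y$1 = -(x$1*y$2 - x$2*y$1) * cnj (x$2)" "y$2 = (x$1*y$2 - x$2*y$1) * cnj (x$1)"
    using perp_num[OF h] by auto
qed

lemma onb_compl:
  assumes "onb2 x y"
  shows "x$1*cnj (x$1) + y$1*cnj (y$1) = 1" "x$2*cnj (x$2) + y$2*cnj (y$2) = 1"
        "x$1*cnj (x$2) + y$1*cnj (y$2) = 0" "x$2*cnj (x$1) + y$2*cnj (y$1) = 0"
proof -
  define l where "l = x$1*y$2 - x$2*y$1"
  have p: "cnj l * l = 1" "y$1 = -l * cnj (x$2)" "y$2 = l * cnj (x$1)"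
    using onb_perp[OF assms] unfolding l_def by auto
  have h: "cnj (x$1)*x$1 + cnj (x$2)*x$2 = 1"
    using assms by (auto simp: onb2_def cinner2)
  have q: "cnj (y$1) = - cnj l * x$2" "cnj (y$2) = cnj l * x$1"
    using arg_cong[OF p(2), of cnj] arg_cong[OF p(3), of cnj] by auto
  show "x$1*cnj (x$1) + y$1*cnj (y$1) = 1" "x$2*cnj (x$2) + y$2*cnj (y$2) = 1"
        "x$1*cnj (x$2) + y$1*cnj (y$2) = 0" "x$2*cnj (x$1) + y$2*cnj (y$1) = 0"
    unfolding q using p h by algebra+
qed

lemma parseval:
  assumes "onb2 x y"
  shows "cnj (cinner x z) * cinner x w + cnj (cinner y z) * cinner y w = cinner z w"
proof -
  note c = onb_compl[OF assms]
  have "cnj (cinner x z) * cinner x w + cnj (cinner y z) * cinner y w =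
     cnj (z$1) * w$1 * (x$1*cnj (x$1) + y$1*cnj (y$1)) + cnj (z$2) * w$2 * (x$2*cnj (x$2) + y$2*cnj (y$2))
     + cnj (z$1) * w$2 * (x$1*cnj (x$2) + y$1*cnj (y$2)) + cnj (z$2) * w$1 * (x$2*cnj (x$1) + y$2*cnj (y$1))"
    by (simp add: cinner2 algebra_simps)
  also have "\<dots> = cinner z w" using c by (simp add: cinner2)
  finally show ?thesis .
qed

definition wmat :: "complex \<Rightarrow> complex \<Rightarrow> cvec \<Rightarrow> cvec \<Rightarrow> cmat" where
  "wmat p q x y = (\<chi> i j. if i = 1 then p * cnj (x$j) else q * cnj (y$j))"

lemma wmat_mv: "wmat p q x y *v z = vector [p * cinner x z, q * cinner y z]"
  by (simp add: vec2_eq mv1 mv2 wmat_def cinner2 algebra_simps)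

lemma wmat_unitary:
  assumes "cnj p * p = 1" "cnj q * q = 1" "onb2 x y"
  shows "unitary2 (wmat p q x y)"
proof -
  note c = onb_compl[OF assms(3)]
  have h: "cnj (x$1)*x$1 + cnj (x$2)*x$2 = 1" "cnj (y$1)*y$1 + cnj (y$2)*y$2 = 1"
     "cnj (x$1)*y$1 + cnj (x$2)*y$2 = 0"
    using assms(3) by (auto simp: onb2_def cinner2)
  have h2: "cnj (x$1)*x$1 + cnj (x$2)*x$2 = 1" "cnj (y$1)*y$1 + cnj (y$2)*y$2 = 1"
     "cnj (x$1)*y$1 + cnj (x$2)*y$2 = 0" "cnj (y$1)*x$1 + cnj (y$2)*x$2 = 0"
  proof -
    have "cnj (cnj (x$1)*y$1 + cnj (x$2)*y$2) = 0" using h(3) by simp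
    hence "cnj (y$1)*x$1 + cnj (y$2)*x$2 = 0" by (simp add: mult.commute)
    thus "cnj (x$1)*x$1 + cnj (x$2)*x$2 = 1" "cnj (y$1)*y$1 + cnj (y$2)*y$2 = 1"
     "cnj (x$1)*y$1 + cnj (x$2)*y$2 = 0" "cnj (y$1)*x$1 + cnj (y$2)*x$2 = 0" using h by auto
  qed
  have a1: "wmat p q x y ** adj (wmat p q x y) = mat 1"
    apply (simp add: vec2_eq matrix_matrix_mult_def sum_2 adj_def wmat_def mat_def)
    using assms(1,2) h2 by algebra
  have a2: "adj (wmat p q x y) ** wmat p q x y = mat 1"
    apply (simp add: vec2_eq matrix_matrix_mult_def sum_2 adj_def wmat_def mat_def)
    using assms(1,2) c by algebra
  show ?thesis using a1 a2 by (simp add: unitary2_def)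
qed

lemma u_mult: "cnj a*a = 1 \<Longrightarrow> cnj b*b = 1 \<Longrightarrow> cnj (a*b)*(a*b) = 1"
proof -
  assume "cnj a*a = 1" "cnj b*b = 1"
  hence "(cnj a*a)*(cnj b*b) = 1" by simp
  thus ?thesis by (simp add: algebra_simps)
qed
lemma u_cnj: "cnj a*a = 1 \<Longrightarrow> cnj (cnj a) * cnj a = 1"
  by (simp add: mult.commute)
lemma u_pow: "cnj a*a = 1 \<Longrightarrow> cnj (a^n)*a^n = 1"
proof (induction n)
  case (Suc n)
  hence "cnj (a * a^n) * (a * a^n) = 1" using u_mult by blast
  thus ?case by simp
qed simp
lemma u_exp: "cnj (exp (\<i> * of_real t)) * exp (\<i> * of_real t) = 1"
  by (simp add: exp_cnj exp_add[symmetric])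

lemma cmod_of_unit: "cnj a*a = 1 \<Longrightarrow> cmod a = 1"
proof -
  assume "cnj a*a = 1"
  hence "of_real ((cmod a)\<^sup>2) = (1::complex)" unfolding complex_norm_square by (simp add: mult.commute)
  hence "(cmod a)\<^sup>2 = 1" using of_real_eq_1_iff by blast
  thus ?thesis by (smt (verit) norm_ge_zero power2_eq_1_iff)
qed

lemma unit_exp: assumes "cnj u * u = 1" shows "\<exists>t. u = exp (\<i> * of_real t)"
proof -
  have "cmod u = 1" using cmod_of_unit[OF assms] .
  hence "u \<noteq> 0" by auto
  hence "cis (Arg u) = sgn u" by (rule cis_Arg)
  also have "sgn u = u" using \<open>cmod u = 1\<close> by (simp add: sgn_div_norm)
  finally show ?thesis by (metis cis_conv_exp)
qed

lemma sqrt_exp: assumes "cnj u * u = 1" shows "\<exists>t. exp (\<i> * of_real t) * exp (\<i> * of_real t) = u"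
proof -
  obtain t where "u = exp (\<i> * of_real t)" using unit_exp[OF assms] by blast
  hence "exp (\<i> * of_real (t/2)) * exp (\<i> * of_real (t/2)) = u"
    by (simp add: exp_add[symmetric] algebra_simps)
  thus ?thesis by blast
qed

definition ph :: "complex \<Rightarrow> complex" where "ph z = (if z = 0 then 1 else sgn z)"

lemma ph_unit: "cnj (ph z) * ph z = 1"
  by (simp add: ph_def complex_norm_square[symmetric] mult.commute norm_sgn)

lemma ph_prop: "cnj (ph z) * z = of_real (cmod z)" "ph z * cnj z = of_real (cmod z)"
proof -
  show a: "cnj (ph z) * z = of_real (cmod z)"
  proof (cases "z = 0")
    case False
    have "cnj (sgn z) * z = (z * cnj z) / of_real (cmod z)" by (simp add: sgn_eq mult.commute)
    also have "\<dots> = of_real ((cmod z)\<^sup>2) / of_real (cmod z)" unfolding complex_norm_square ..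
    also have "\<dots> = of_real (cmod z)" using False by (simp add: power2_eq_square)
    finally show ?thesis using False by (simp add: ph_def)
  qed (simp add: ph_def)
  show "ph z * cnj z = of_real (cmod z)" using arg_cong[OF a, of cnj] by (simp add: mult.commute)
qed

lemma sq_norms: assumes "cnj A*A + cnj B*B = 1"
  shows "(cmod A)\<^sup>2 + (cmod B)\<^sup>2 = 1" "sqrt (1 - (cmod A)\<^sup>2) = cmod B" "cmod A \<le> 1"
proof -
  have "of_real ((cmod A)\<^sup>2 + (cmod B)\<^sup>2) = (1::complex)" using assms
    unfolding of_real_add complex_norm_square by (simp add: mult.commute)
  thus h: "(cmod A)\<^sup>2 + (cmod B)\<^sup>2 = 1" using of_real_eq_1_iff by blast
  hence "1 - (cmod A)\<^sup>2 = (cmod B)\<^sup>2" by simp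
  thus "sqrt (1 - (cmod A)\<^sup>2) = cmod B" by simp
  show "cmod A \<le> 1" using h
    by (metis abs_norm_cancel abs_square_le_1 le_add_same_cancel1 zero_le_power2)
qed

lemma kb_e1: assumes "x$2 = 0" "v$1 = cnj (E * x$1) * y$1" "v$2 = cnj (E * x$1) * y$2"
  shows "(\<chi> i j. E * ket_bra x y $ i $ j) = ket_bra e1 v"
  using assms by (simp add: vec2_eq ket_bra_def e1_def mult.commute mult.left_commute)

lemma kb_e2: assumes "x$1 = 0" "v$1 = cnj (E * x$2) * y$1" "v$2 = cnj (E * x$2) * y$2"
  shows "(\<chi> i j. E * ket_bra x y $ i $ j) = ket_bra e2 v"
  using assms by (simp add: vec2_eq ket_bra_def e2_def mult.commute mult.left_commute)



lemmas cs = complex_cnj_mult complex_cnj_cnj complex_cnj_minus complex_cnj_one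

lemma alg_vpos: fixes Y E ap bp A Bc a b :: complex
  assumes "cnj Y*Y=1" "cnj E*E=1" "cnj ap*A = a" "cnj bp * Bc = b"
  shows "a = cnj (E*Y) * (Y*(E*cnj ap)*A)" "b = cnj (E*Y) * (E*Y*cnj bp*Bc)"
  using assms by (simp only: cs; algebra)+

lemma alg_v0: fixes E am a0 b0 bm \<rho> Q e1 A Bc a b :: complex
  assumes "cnj E*E=1" "cnj am*am=1" "cnj b0*b0 = 1" "cnj a0*A = a" "cnj b0*Bc = b"
    "\<rho> = E*cnj am" "Q = am*cnj bm" "e1 = cnj bm * b0"
  shows "a = cnj (E * cnj \<rho>) * (am * cnj a0 * A)" "e1 * b = cnj (E*cnj \<rho>) * (Q * Bc)"
  using assms by (simp only: cs; algebra)+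

lemma alg_vneg: fixes X E am bm \<rho> Q A Bc a b :: complex
  assumes "cnj X * X = 1" "cnj E*E=1" "cnj am*am=1" "cnj bm * bm = 1" "\<rho> = E*cnj am"
    "Q = am*cnj bm" "cnj am*A=a" "cnj bm*Bc=b"
  shows "a = cnj (E*(cnj \<rho>*X)) * (X*A)" "b = cnj (E*(cnj \<rho>*X)) * (Q*X*Bc)"
  using assms by (simp only: cs; algebra)+

lemma alg_wpos: fixes Y E ap bp dm dp C D Bc A a b e3 pm :: complex
  assumes "cnj Y*Y=1" "cnj E*E=1" "cnj ap*ap=1" "cnj bp*bp=1" "dm = E*E" "C = -dp*cnj Bc"
   "D = dp*cnj A" "bp*cnj Bc = b" "ap*cnj A = a" "e3 = cnj dm*dp" "pm = Y*(E*cnj ap)"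
  shows "-e3*b = cnj (E*(E*pm*cnj bp)) * (pm*C)" "e3*a = cnj (E*(E*pm*cnj bp)) * ((E*Y*cnj bp)*D)"
  using assms by (simp only: cs; algebra)+

lemma alg_w0: fixes p0 am a0 E b0 bp dm d0 C D Bc A a b e1 e2 bm Q :: complex
  assumes "p0 = am*cnj a0" "cnj E*E=1" "cnj am*am=1" "cnj a0*a0 = 1" "cnj b0*b0=1" "cnj bp*bp = 1"
   "dm=E*E" "C = -d0*cnj Bc" "D = d0*cnj A" "b0*cnj Bc = b" "a0*cnj A = a" "e1 = cnj bm*b0"
   "e2 = cnj dm*bp*d0*cnj b0" "Q = am*cnj bm"
  shows "-e2*b = cnj (E*(E*p0*cnj bp))*(p0*C)" "e1*e2*a = cnj (E*(E*p0*cnj bp))*(Q*D)"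
  using assms by (simp only: cs; algebra)+

lemma alg_wneg: fixes X E am bm dm \<rho> Q C D Bc A a b :: complex
  assumes "cnj X*X = 1" "cnj E*E = 1" "cnj am*am = 1" "cnj bm*bm = 1" "dm = E*E"
   "\<rho> = E*cnj am" "Q = am*cnj bm" "C = -dm*cnj Bc" "D = dm*cnj A" "bm*cnj Bc = b" "am*cnj A = a"
  shows "-b = cnj (E*(Q*X)) * ((cnj \<rho> * X)*C)" "a = cnj (E*(Q*X)) * ((Q*(cnj \<rho>*X))*D)"
  using assms by (simp only: cs; algebra)+



lemma cinner_sym: "cinner y x = cnj (cinner x y)"
  by (simp add: cinner2 mult.commute)

lemma ph_eq: "z = ph z * of_real (cmod z)"
proof -
  have "ph z * (cnj (ph z) * z) = (cnj (ph z) * ph z) * z" by (simp add: algebra_simps)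
  thus ?thesis using ph_prop(1)[of z] ph_unit[of z] by simp
qed

lemma norm_cinner: assumes "norm (x::cvec) = 1" shows "cinner x x = 1"
proof -
  have "sqrt ((cmod (x$1))\<^sup>2 + (cmod (x$2))\<^sup>2) = 1" using assms
    by (simp add: norm_vec_def L2_set_def sum_2)
  hence h: "(cmod (x$1))\<^sup>2 + (cmod (x$2))\<^sup>2 = 1" by simp
  have "cinner x x = of_real ((cmod (x$1))\<^sup>2 + (cmod (x$2))\<^sup>2)"
    unfolding cinner2 of_real_add complex_norm_square by (simp add: mult.commute)
  thus ?thesis using h by simp
qed

lemma part1:
  assumes tp: "two_phase_one_defect B" and nP: "norm \<Phi> = 1"
  shows "\<exists>rp rm r0 \<alpha> m1 m2 m3 \<theta>.
               0 \<le> rp \<and> rp \<le> 1 \<and> 0 \<le> rm \<and> rm \<le> 1 \<and> 0 \<le> r0 \<and> r0 \<le> 1 \<and>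
               0 \<le> \<alpha> \<and> \<alpha> \<le> 1 \<and>
               unit_equiv B \<Phi> (Uq rp rm r0 m1 m2 m3) (Phiq \<alpha> \<theta>)"
proof -
  from tp obtain xr xl zl zr x1p x2p z1p z2p x1m x2m z1m z2m where
    wr: "walk_repr B xr xl zl zr" and
    P: "\<forall>n\<ge>1. xr n = x1p \<and> xl n = x2p \<and> zl n = z1p \<and> zr n = z2p" and
    M: "\<forall>n\<le>-1. xr n = x1m \<and> xl n = x2m \<and> zl n = z1m \<and> zr n = z2m"
    unfolding two_phase_one_defect_def by blast
  have onx: "\<And>n. onb2 (xr n) (xl n)" and onz: "\<And>n. onb2 (zl n) (zr n)"
    and Bd: "\<And>n m. B n m = (if n = m - 1 then ket_bra (xr n) (zl m)
                      else if n = m + 1 then ket_bra (xl n) (zr m) else 0)"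
    using wr unfolding walk_repr_def by auto
  define A where "A n = cinner (xr n) (zl n)" for n
  define Bc where "Bc n = cinner (xl n) (zl n)" for n
  define C where "C n = cinner (xr n) (zr n)" for n
  define D where "D n = cinner (xl n) (zr n)" for n
  define dd where "dd n = A n * D n - Bc n * C n" for n
  have coin: "cnj (A n)*A n + cnj (Bc n)*Bc n = 1 \<and> cnj (C n)*C n + cnj (D n)*D n = 1
       \<and> cnj (A n)*C n + cnj (Bc n)*D n = 0" for n
    using parseval[OF onx[of n], of "zl n"] parseval[OF onx[of n], of "zr n"] onz[of n]
    unfolding A_def Bc_def C_def D_def onb2_def by auto
  have dC: "C n = - dd n * cnj (Bc n)" and dD: "D n = dd n * cnj (A n)"
    and du: "cnj (dd n) * dd n = 1" for n
    using perp_num[of "A n" "Bc n" "C n" "D n"] coin[of n] unfolding dd_def by auto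
  have Pc: "A n = A 1 \<and> Bc n = Bc 1 \<and> C n = C 1 \<and> D n = D 1" if "n \<ge> 1" for n
    using P that unfolding A_def Bc_def C_def D_def by auto
  have Mc: "A n = A (-1) \<and> Bc n = Bc (-1) \<and> C n = C (-1) \<and> D n = D (-1)" if "n \<le> -1" for n
    using M that unfolding A_def Bc_def C_def D_def by auto
  define am where "am = ph (A (-1))"
  define bm where "bm = ph (Bc (-1))"
  define a0 where "a0 = ph (A 0)"
  define b0 where "b0 = ph (Bc 0)"
  define ap where "ap = ph (A 1)"
  define bp where "bp = ph (Bc 1)"
  obtain l where EE: "exp (\<i> * of_real l) * exp (\<i> * of_real l) = dd (-1)"
    using sqrt_exp[OF du[of "-1"]] by blast
  define E where "E = exp (\<i> * of_real l)"
  have uE: "cnj E * E = 1" unfolding E_def by (rule u_exp)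
  define \<rho> where "\<rho> = E * cnj am"
  define Q where "Q = am * cnj bm"
  define pp where "pp k = am * cnj a0 * (E * cnj ap) ^ k" for k
  define p where "p n = (if n < 0 then cnj \<rho> ^ nat (-n) else pp (nat n))" for n
  define q where "q n = (if n \<le> 0 then Q * cnj \<rho> ^ nat (-n) else E * p (n - 1) * cnj bp)" for n
  define W where "W n = wmat (p n) (q n) (xr n) (xl n)" for n
  have uam: "cnj am * am = 1" and ubm: "cnj bm * bm = 1" and ua0: "cnj a0 * a0 = 1"
    and ub0: "cnj b0 * b0 = 1" and uap: "cnj ap * ap = 1" and ubp: "cnj bp * bp = 1"
    unfolding am_def bm_def a0_def b0_def ap_def bp_def by (rule ph_unit)+
  have pam: "cnj am * A (-1) = cmod (A (-1))" "am * cnj (A (-1)) = cmod (A (-1))"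
    unfolding am_def by (rule ph_prop)+
  have pbm: "cnj bm * Bc (-1) = cmod (Bc (-1))" "bm * cnj (Bc (-1)) = cmod (Bc (-1))"
    unfolding bm_def by (rule ph_prop)+
  have pa0: "cnj a0 * A 0 = cmod (A 0)" "a0 * cnj (A 0) = cmod (A 0)"
    unfolding a0_def by (rule ph_prop)+
  have pb0: "cnj b0 * Bc 0 = cmod (Bc 0)" "b0 * cnj (Bc 0) = cmod (Bc 0)"
    unfolding b0_def by (rule ph_prop)+
  have pap: "cnj ap * A 1 = cmod (A 1)" "ap * cnj (A 1) = cmod (A 1)"
    unfolding ap_def by (rule ph_prop)+
  have pbp: "cnj bp * Bc 1 = cmod (Bc 1)" "bp * cnj (Bc 1) = cmod (Bc 1)"
    unfolding bp_def by (rule ph_prop)+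
  have ur: "cnj \<rho> * \<rho> = 1" unfolding \<rho>_def using u_mult[OF uE u_cnj[OF uam]] .
  have uQ: "cnj Q * Q = 1" unfolding Q_def using u_mult[OF uam u_cnj[OF ubm]] .
  have upp: "cnj (pp k) * pp k = 1" for k
    unfolding pp_def by (intro u_mult u_pow uam ua0 uE u_cnj uap)
  have up: "cnj (p n) * p n = 1" for n
    unfolding p_def using upp u_pow[OF u_cnj[OF ur]] by auto
  have uq: "cnj (q n) * q n = 1" for n
  proof (cases "n \<le> 0")
    case True thus ?thesis unfolding q_def using u_mult[OF uQ u_pow[OF u_cnj[OF ur]]] by simp
  next
    case False thus ?thesis unfolding q_def using u_mult[OF u_mult[OF uE up] u_cnj[OF ubp]] by simp
  qed
  have uW: "unitary2 (W n)" for n unfolding W_def by (rule wmat_unitary[OF up uq onx])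
  have Wx: "W n *v xr n = vector [p n, 0]" "W n *v xl n = vector [0, q n]" for n
  proof -
    have "cinner (xl n) (xr n) = 0" using onx[of n] unfolding onb2_def by (subst cinner_sym) simp
    thus "W n *v xr n = vector [p n, 0]" "W n *v xl n = vector [0, q n]"
      using onx[of n] unfolding W_def wmat_mv onb2_def by auto
  qed
  have Wz: "W n *v zl n = vector [p n * A n, q n * Bc n]" "W n *v zr n = vector [p n * C n, q n * D n]" for n
    unfolding W_def wmat_mv A_def Bc_def C_def D_def by simp_all
  have dmE: "dd (-1) = E * E" using EE unfolding E_def by simp
  have uEE: "cnj (dd (-1)) = cnj E * cnj E" unfolding dmE by (rule complex_cnj_mult)
  define rp where "rp = cmod (A 1)"
  define rm where "rm = cmod (A (-1))"
  define r0 where "r0 = cmod (A 0)"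
  obtain m1 where em1: "exp (\<i> * of_real m1) = cnj bm * b0"
    using unit_exp[OF u_mult[OF u_cnj[OF ubm] ub0]] by metis
  obtain m2 where em2: "exp (\<i> * of_real m2) = cnj (dd (-1)) * bp * dd 0 * cnj b0"
    using unit_exp[OF u_mult[OF u_mult[OF u_mult[OF u_cnj[OF du] ubp] du] u_cnj[OF ub0]]] by metis
  obtain m3 where em3: "exp (\<i> * of_real m3) = cnj (dd (-1)) * dd 1"
    using unit_exp[OF u_mult[OF u_cnj[OF du] du]] by metis
  have sq: "sqrt (1 - (cmod (A n))\<^sup>2) = cmod (Bc n)" "cmod (A n) \<le> 1" for n
    using sq_norms[of "A n" "Bc n"] coin[of n] by auto
  have vf: "Uq_v rp rm r0 m1 m $ 1 = cnj (E * p (m-1)) * (p m * A m) \<and>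
            Uq_v rp rm r0 m1 m $ 2 = cnj (E * p (m-1)) * (q m * Bc m)" for m
  proof (cases "m \<ge> 1")
    case True
    define Y where "Y = pp (nat (m-1))"
    have nm: "nat m = Suc (nat (m-1))" using True by (subst Suc_nat_eq_nat_zadd1) auto
    have e: "p (m-1) = Y" "p m = Y * (E * cnj ap)" "q m = E * Y * cnj bp"
      using True unfolding p_def q_def Y_def pp_def by (auto simp: nm)
    show ?thesis using True Pc[OF True] sq[of 1]
      alg_vpos[OF upp[of "nat (m-1)", folded Y_def] uE pap(1) pbp(1)]
      unfolding e Uq_v_def rp_def by simp
  next
    case F: False
    show ?thesis
    proof (cases "m = 0")
      case True
      have e: "p (m-1) = cnj \<rho>" "p m = am * cnj a0" "q m = Q"
        using True unfolding p_def q_def pp_def by auto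
      show ?thesis using True sq[of 0]
        alg_v0[OF uE uam ub0 pa0(1) pb0(1) \<rho>_def Q_def em1]
        unfolding e Uq_v_def r0_def by simp
    next
      case False
      hence m: "m \<le> -1" using F by simp
      define X where "X = cnj \<rho> ^ nat (-m)"
      have nm: "nat (1 - m) = Suc (nat (-m))" using m by (subst Suc_nat_eq_nat_zadd1) auto
      have e: "p (m-1) = cnj \<rho> * X" "p m = X" "q m = Q * X"
        using m unfolding p_def q_def X_def by (auto simp: nm)
      have uX: "cnj X * X = 1" unfolding X_def by (rule u_pow[OF u_cnj[OF ur]])
      show ?thesis using m Mc[OF m] sq[of "-1"]
        alg_vneg[OF uX uE uam ubm \<rho>_def Q_def pam(1) pbm(1)]
        unfolding e Uq_v_def rm_def by simp
    qed
  qed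
  have e12: "exp (\<i> * of_real (m1 + m2)) = exp (\<i> * of_real m1) * exp (\<i> * of_real m2)"
    by (simp add: distrib_left exp_add)
  have wf: "Uq_w rp rm r0 m1 m2 m3 m $ 1 = cnj (E * q (m+1)) * (p m * C m) \<and>
            Uq_w rp rm r0 m1 m2 m3 m $ 2 = cnj (E * q (m+1)) * (q m * D m)" for m
  proof (cases "m \<ge> 1")
    case True
    define Y where "Y = pp (nat (m-1))"
    have nm: "nat m = Suc (nat (m-1))" using True by (subst Suc_nat_eq_nat_zadd1) auto
    have e: "p m = Y * (E * cnj ap)" "q m = E * Y * cnj bp" "q (m+1) = E * p m * cnj bp"
      using True unfolding q_def unfolding p_def Y_def pp_def by (auto simp: nm)
    show ?thesis using True Pc[OF True] sq[of 1]
      alg_wpos[OF upp[of "nat (m-1)", folded Y_def] uE uap ubp dmE dC[of 1] dD[of 1] pbp(2) pap(2) em3 e(1)]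
      unfolding e(2,3) Uq_w_def rp_def by simp
  next
    case F: False
    show ?thesis
    proof (cases "m = 0")
      case True
      have e: "p m = am * cnj a0" "q (m+1) = E * p m * cnj bp" "q m = Q"
        using True unfolding q_def unfolding p_def pp_def by auto
      show ?thesis using True sq[of 0]
        alg_w0[OF e(1) uE uam ua0 ub0 ubp dmE dC[of 0] dD[of 0] pb0(2) pa0(2) em1 em2 Q_def]
        unfolding e(2,3) Uq_w_def r0_def e12 by simp
    next
      case False
      hence m: "m \<le> -1" using F by simp
      define X where "X = cnj \<rho> ^ nat (-(m+1))"
      have nm: "nat (- m) = Suc (nat (-(m+1)))" using m by (subst Suc_nat_eq_nat_zadd1) auto
      have e: "p m = cnj \<rho> * X" "q m = Q * (cnj \<rho> * X)" "q (m+1) = Q * X"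
        using m unfolding p_def q_def X_def by (auto simp: nm)
      have uX: "cnj X * X = 1" unfolding X_def by (rule u_pow[OF u_cnj[OF ur]])
      show ?thesis using m Mc[OF m] sq[of "-1"]
        alg_wneg[OF uX uE uam ubm dmE \<rho>_def Q_def dC[of "-1"] dD[of "-1"] pbm(2) pam(2)]
        unfolding e Uq_w_def rm_def by simp
    qed
  qed
  have blk: "\<forall>n m. (\<chi> i j. exp (\<i> * of_real l) * (W n ** B n m ** adj (W m)) $ i $ j)
      = Uq rp rm r0 m1 m2 m3 n m"
  proof (intro allI)
    fix n m :: int
    consider "n = m - 1" | "n = m + 1" | "n \<noteq> m - 1" "n \<noteq> m + 1" by blast
    thus "(\<chi> i j. exp (\<i> * of_real l) * (W n ** B n m ** adj (W m)) $ i $ j)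
      = Uq rp rm r0 m1 m2 m3 n m"
    proof cases
      case 1
      have q1: "W n ** B n m ** adj (W m) = ket_bra (vector [p n, 0]) (vector [p m * A m, q m * Bc m])"
        using 1 by (simp add: Bd mm_kb Wx Wz)
      have q2: "Uq rp rm r0 m1 m2 m3 n m = ket_bra e1 (Uq_v rp rm r0 m1 m)"
        using 1 by (simp add: Uq_def)
      show ?thesis unfolding E_def[symmetric] q1 q2
        by (rule kb_e1) (use vf[of m] 1 in auto)
    next
      case 2
      hence ne: "n \<noteq> m - 1" by simp
      have q1: "W n ** B n m ** adj (W m) = ket_bra (vector [0, q n]) (vector [p m * C m, q m * D m])"
        using 2 ne by (simp add: Bd mm_kb Wx Wz)
      have q2: "Uq rp rm r0 m1 m2 m3 n m = ket_bra e2 (Uq_w rp rm r0 m1 m2 m3 m)"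
        using 2 ne by (simp add: Uq_def)
      show ?thesis unfolding E_def[symmetric] q1 q2
        by (rule kb_e2) (use wf[of m] 2 in auto)
    next
      case 3
      thus ?thesis by (simp add: Bd Uq_def vec_eq_iff)
    qed
  qed
  define f1 where "f1 = p 0 * cinner (xr 0) \<Phi>"
  define f2 where "f2 = q 0 * cinner (xl 0) \<Phi>"
  have Wphi: "W 0 *v \<Phi> = vector [f1, f2]" unfolding W_def wmat_mv f1_def f2_def ..
  have nf: "cnj f1 * f1 + cnj f2 * f2 = 1"
  proof -
    have h: "cnj (cinner (xr 0) \<Phi>) * cinner (xr 0) \<Phi> + cnj (cinner (xl 0) \<Phi>) * cinner (xl 0) \<Phi> = 1"
      using parseval[OF onx[of 0], of \<Phi> \<Phi>] norm_cinner[OF nP] by simp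
    show ?thesis unfolding f1_def f2_def using h up[of 0] uq[of 0] by (simp only: cs; algebra)
  qed
  obtain l' where el': "exp (\<i> * of_real l') = cnj (ph f1)"
    using unit_exp[OF u_cnj[OF ph_unit]] by metis
  obtain \<theta> where eth: "exp (\<i> * of_real \<theta>) = ph (exp (\<i> * of_real l') * f2)"
    using unit_exp[OF ph_unit] by metis
  have phi: "(\<chi> i. exp (\<i> * of_real l') * (W 0 *v \<Phi>) $ i) = Phiq (cmod f1) \<theta>"
  proof -
    have c1: "exp (\<i> * of_real l') * f1 = cmod f1" unfolding el' by (rule ph_prop)
    have "exp (\<i> * of_real l') * f2 = exp (\<i> * of_real \<theta>) * cmod (exp (\<i> * of_real l') * f2)"
      unfolding eth by (rule ph_eq)
    also have "cmod (exp (\<i> * of_real l') * f2) = cmod f2" by (simp add: norm_mult)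
    finally have c2: "exp (\<i> * of_real l') * f2 = exp (\<i> * of_real \<theta>) * cmod f2" .
    show ?thesis unfolding Wphi Phiq_def using c1 c2 sq_norms[OF nf]
      by (simp add: vec2_eq)
  qed
  have "unit_equiv B \<Phi> (Uq rp rm r0 m1 m2 m3) (Phiq (cmod f1) \<theta>)"
    unfolding unit_equiv_def using uW blk phi by blast
  moreover have "0 \<le> rp \<and> rp \<le> 1 \<and> 0 \<le> rm \<and> rm \<le> 1 \<and> 0 \<le> r0 \<and> r0 \<le> 1 \<and>
     0 \<le> cmod f1 \<and> cmod f1 \<le> 1"
    unfolding rp_def rm_def r0_def using sq(2) sq_norms(3)[OF nf] by auto
  ultimately show ?thesis by blast
qed



lemma alg_uniq: fixes E am2 am1 a0 a1 bm1 b0 b1 b2 cE cam2 cam1 ca0 ca1 cbm1 cb0 cb1 cb2 :: complex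
  assumes "cE*E=1" "cam2*am2=1" "cam1*am1=1" "ca0*a0=1" "ca1*a1=1" "cbm1*bm1=1" "cb0*b0=1" "cb1*b1=1" "cb2*b2=1"
   "E*am2*cam1 = 1" "E*am2*cbm1 = 1" "E*bm1*cam2 = 1" "E*b0*cam1 = 1" "E*am1*ca0 = 1"
   "E*a0*ca1 = 1" "E*a0*cb1 = 1" "E*a1*cb2 = 1"
  shows "E*am1*cb0 = 1" "E*b1*ca0 = 1" "E*b2*ca1 = 1" "b0 = a0"
  using assms by algebra+


lemma kb_entry: "(\<chi> i j. E * ket_bra x y $ i $ j) = ket_bra x' y' \<Longrightarrow>
   E * x$i * cnj (y$j) = x'$i * cnj (y'$j)"
  by (drule arg_cong[where f="\<lambda>M. M$i$j"]) (simp add: ket_bra_def mult.assoc)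

lemma unitary_nz: assumes "unitary2 W" "v \<noteq> 0" shows "W *v v \<noteq> 0"
proof
  assume "W *v v = 0"
  hence "adj W *v (W *v v) = 0" by simp
  hence "(adj W ** W) *v v = 0" by (simp add: matrix_vector_mul_assoc)
  thus False using assms unfolding unitary2_def by simp
qed

lemma nz_entry: "(y::cvec) \<noteq> 0 \<Longrightarrow> \<exists>j. y$j \<noteq> 0"
  by (auto simp: vec_eq_iff)

lemma diag1: assumes "(\<chi> i j. E * ket_bra x y $ i $ j) = ket_bra e1 v'" "y \<noteq> 0" "E \<noteq> 0"
  shows "x$2 = 0"
proof -
  obtain j where j: "y$j \<noteq> 0" using nz_entry[OF assms(2)] by blast
  have "E * x$2 * cnj (y$j) = e1$2 * cnj (v'$j)" by (rule kb_entry[OF assms(1)])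
  thus ?thesis using j assms(3) by (simp add: e1_def)
qed

lemma diag2: assumes "(\<chi> i j. E * ket_bra x y $ i $ j) = ket_bra e2 v'" "y \<noteq> 0" "E \<noteq> 0"
  shows "x$1 = 0"
proof -
  obtain j where j: "y$j \<noteq> 0" using nz_entry[OF assms(2)] by blast
  have "E * x$1 * cnj (y$j) = e2$1 * cnj (v'$j)" by (rule kb_entry[OF assms(1)])
  thus ?thesis using j assms(3) by (simp add: e2_def)
qed

lemma pos_unit: fixes u :: complex and x y :: real
  assumes "cnj u * u = 1" "0 < x" "0 < y" "u * of_real x = of_real y"
  shows "u = 1" "x = y"
proof -
  have "cmod (u * of_real x) = y" using assms(3,4) by simp
  hence "cmod u * x = y" using assms(2) by (simp add: norm_mult)
  thus xy: "x = y" using cmod_of_unit[OF assms(1)] by simp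
  show "u = 1" using assms(4) assms(2) unfolding xy by (simp add: assms(3))
qed

lemma exp_inj: fixes x y :: real
  assumes "exp (\<i> * of_real x) = exp (\<i> * of_real y)" "x \<in> {0..<2*pi}" "y \<in> {0..<2*pi}"
  shows "x = y"
proof -
  obtain n :: int where "\<i> * of_real x = \<i> * of_real y + (of_int (2 * n) * pi) * \<i>"
    using assms(1) exp_eq by blast
  hence "complex_of_real x = of_real (y + 2 * n * pi)"
  proof -
    assume h: "\<i> * of_real x = \<i> * of_real y + (of_int (2 * n) * pi) * \<i>"
    have "\<i> * of_real x = \<i> * of_real (y + 2 * n * pi)" unfolding h by (simp add: algebra_simps)
    thus ?thesis by simp
  qed
  hence e: "x = y + 2 * n * pi" using of_real_eq_iff by blast
  have "n = 0"
  proof (rule ccontr)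
    assume "n \<noteq> 0"
    hence "\<bar>n\<bar> \<ge> 1" by simp
    hence "\<bar>real_of_int n\<bar> \<ge> 1" by linarith
    hence "\<bar>2 * n * pi\<bar> \<ge> 2 * pi" using pi_gt_zero
      by (simp add: abs_mult)
    thus False using assms(2,3) e by auto
  qed
  thus ?thesis using e by simp
qed

lemma s_pos: "r \<in> {0<..<1} \<Longrightarrow> 0 < sqrt (1 - r\<^sup>2)"
  by (simp add: power_less_one_iff abs_square_less_1)

lemma part2:
  assumes r: "rp \<in> {0<..<1}" "rm \<in> {0<..<1}" "r0 \<in> {0<..<1}" "\<alpha> \<in> {0<..<1}"
    "rp' \<in> {0<..<1}" "rm' \<in> {0<..<1}" "r0' \<in> {0<..<1}" "\<alpha>' \<in> {0<..<1}"
  and t: "m1 \<in> {0..<2*pi}" "m2 \<in> {0..<2*pi}" "m3 \<in> {0..<2*pi}" "\<theta> \<in> {0..<2*pi}"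
    "m1' \<in> {0..<2*pi}" "m2' \<in> {0..<2*pi}" "m3' \<in> {0..<2*pi}" "\<theta>' \<in> {0..<2*pi}"
  and ue: "unit_equiv (Uq rp rm r0 m1 m2 m3) (Phiq \<alpha> \<theta>) (Uq rp' rm' r0' m1' m2' m3') (Phiq \<alpha>' \<theta>')"
  shows "rp = rp' \<and> rm = rm' \<and> r0 = r0' \<and> m1 = m1' \<and> m2 = m2' \<and> m3 = m3' \<and>
                 \<alpha> = \<alpha>' \<and> \<theta> = \<theta>'"
proof -
  obtain l l' W where uW: "\<forall>n. unitary2 (W n)"
    and H: "\<forall>n m. (\<chi> i j. exp (\<i> * of_real l) * (W n ** Uq rp rm r0 m1 m2 m3 n m ** adj (W m)) $ i $ j)
            = Uq rp' rm' r0' m1' m2' m3' n m"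
    and HP: "(\<chi> i. exp (\<i> * of_real l') * (W 0 *v Phiq \<alpha> \<theta>) $ i) = Phiq \<alpha>' \<theta>'"
    using ue unfolding unit_equiv_def by blast
  define E where "E = exp (\<i> * of_real l)"
  have uE: "cnj E * E = 1" unfolding E_def by (rule u_exp)
  have E0: "E \<noteq> 0" unfolding E_def by simp
  define v where "v = Uq_v rp rm r0 m1"
  define v' where "v' = Uq_v rp' rm' r0' m1'"
  define w where "w = Uq_w rp rm r0 m1 m2 m3"
  define w' where "w' = Uq_w rp' rm' r0' m1' m2' m3'"
  have HV: "(\<chi> i j. E * ket_bra (W (m-1) *v e1) (W m *v v m) $ i $ j) = ket_bra e1 (v' m)" for m
  proof -
    have "Uq rp rm r0 m1 m2 m3 (m-1) m = ket_bra e1 (v m)" "Uq rp' rm' r0' m1' m2' m3' (m-1) m = ket_bra e1 (v' m)"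
      by (simp_all add: Uq_def v_def v'_def)
    thus ?thesis using H[rule_format, of "m-1" m] unfolding E_def by (simp add: mm_kb)
  qed
  have HW: "(\<chi> i j. E * ket_bra (W (m+1) *v e2) (W m *v w m) $ i $ j) = ket_bra e2 (w' m)" for m
  proof -
    have "Uq rp rm r0 m1 m2 m3 (m+1) m = ket_bra e2 (w m)" "Uq rp' rm' r0' m1' m2' m3' (m+1) m = ket_bra e2 (w' m)"
      by (simp_all add: Uq_def w_def w'_def)
    thus ?thesis using H[rule_format, of "m+1" m] unfolding E_def by (simp add: mm_kb)
  qed
  have vnz: "v m \<noteq> 0" for m
  proof -
    have "v m $ 1 \<noteq> 0" using r by (simp add: v_def Uq_v_def)
    thus ?thesis by auto
  qed
  have wnz: "w m \<noteq> 0" for m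
  proof -
    have "w m $ 2 \<noteq> 0" using r by (simp add: w_def Uq_w_def)
    thus ?thesis by auto
  qed
  have z21: "W k $ 2 $ 1 = 0" for k
    using diag1[OF HV[of "k+1"] unitary_nz[OF uW[rule_format] vnz] E0] by (simp add: mv2 e1_def)
  have z12: "W k $ 1 $ 2 = 0" for k
    using diag2[OF HW[of "k-1"] unitary_nz[OF uW[rule_format] wnz] E0] by (simp add: mv1 e2_def)
  define a where "a k = W k $ 1 $ 1" for k
  define b where "b k = W k $ 2 $ 2" for k
  have ua: "cnj (a k) * a k = 1" and ub: "cnj (b k) * b k = 1" for k
  proof -
    have "adj (W k) ** W k = mat 1" using uW unfolding unitary2_def by blast
    hence "(adj (W k) ** W k) $ 1 $ 1 = 1" "(adj (W k) ** W k) $ 2 $ 2 = 1" by (simp_all add: mat_def)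
    thus "cnj (a k) * a k = 1" "cnj (b k) * b k = 1"
      by (simp_all add: matrix_matrix_mult_def sum_2 adj_def a_def b_def z12 z21)
  qed
  have Wmv: "W k *v x = vector [a k * x$1, b k * x$2]" for k x
    by (simp add: vec2_eq mv1 mv2 z12 z21 a_def b_def)
  have Vq1: "E * a (m-1) * cnj (a m) * cnj (v m $ 1) = cnj (v' m $ 1)" for m
    using kb_entry[OF HV[of m], of 1 1] by (simp add: Wmv e1_def mult.assoc)
  have Vq2: "E * a (m-1) * cnj (b m) * cnj (v m $ 2) = cnj (v' m $ 2)" for m
    using kb_entry[OF HV[of m], of 1 2] by (simp add: Wmv e1_def mult.assoc)
  have Wq1: "E * b (m+1) * cnj (a m) * cnj (w m $ 1) = cnj (w' m $ 1)" for m
    using kb_entry[OF HW[of m], of 2 1] by (simp add: Wmv e2_def mult.assoc)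
  have Wq2: "E * b (m+1) * cnj (b m) * cnj (w m $ 2) = cnj (w' m $ 2)" for m
    using kb_entry[OF HW[of m], of 2 2] by (simp add: Wmv e2_def mult.assoc)
  have U: "cnj (E * x * cnj y) * (E * x * cnj y) = 1" if "cnj x * x = 1" "cnj y * y = 1" for x y
    using u_mult[OF u_mult[OF uE that(1)] u_cnj[OF that(2)]] .
  have sp: "0 < sqrt (1 - rp\<^sup>2)" "0 < sqrt (1 - rm\<^sup>2)" "0 < sqrt (1 - r0\<^sup>2)"
    "0 < sqrt (1 - rp'\<^sup>2)" "0 < sqrt (1 - rm'\<^sup>2)" "0 < sqrt (1 - r0'\<^sup>2)"
    "0 < sqrt (1 - \<alpha>\<^sup>2)" "0 < sqrt (1 - \<alpha>'\<^sup>2)"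
    using s_pos[OF r(1)] s_pos[OF r(2)] s_pos[OF r(3)] s_pos[OF r(5)] s_pos[OF r(6)] s_pos[OF r(7)]
      s_pos[OF r(4)] s_pos[OF r(8)] by auto
  have e1: "(E * a (-2) * cnj (a (-1))) * of_real rm = of_real rm'"
    using Vq1[of "-1"] by (simp add: v_def v'_def Uq_v_def)
  note f1 = pos_unit[OF U[OF ua ua] _ _ e1]
  have e2: "(E * a (-2) * cnj (b (-1))) * of_real (sqrt (1 - rm\<^sup>2)) = of_real (sqrt (1 - rm'\<^sup>2))"
    using Vq2[of "-1"] by (simp add: v_def v'_def Uq_v_def)
  note f2 = pos_unit[OF U[OF ua ub] _ _ e2]
  have e3: "(E * b (-1) * cnj (a (-2))) * of_real (sqrt (1 - rm\<^sup>2)) = of_real (sqrt (1 - rm'\<^sup>2))"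
    using Wq1[of "-2"] by (simp add: w_def w'_def Uq_w_def)
  note f3 = pos_unit[OF U[OF ub ua] _ _ e3]
  have e4: "(E * b 0 * cnj (a (-1))) * of_real (sqrt (1 - rm\<^sup>2)) = of_real (sqrt (1 - rm'\<^sup>2))"
    using Wq1[of "-1"] by (simp add: w_def w'_def Uq_w_def)
  note f4 = pos_unit[OF U[OF ub ua] _ _ e4]
  have e5: "(E * a (-1) * cnj (a 0)) * of_real r0 = of_real r0'"
    using Vq1[of 0] by (simp add: v_def v'_def Uq_v_def)
  note f5 = pos_unit[OF U[OF ua ua] _ _ e5]
  have e6: "(E * a 0 * cnj (a 1)) * of_real rp = of_real rp'"
    using Vq1[of 1] by (simp add: v_def v'_def Uq_v_def)
  note f6 = pos_unit[OF U[OF ua ua] _ _ e6]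
  have e7: "(E * a 0 * cnj (b 1)) * of_real (sqrt (1 - rp\<^sup>2)) = of_real (sqrt (1 - rp'\<^sup>2))"
    using Vq2[of 1] by (simp add: v_def v'_def Uq_v_def)
  note f7 = pos_unit[OF U[OF ua ub] _ _ e7]
  have e8: "(E * a 1 * cnj (b 2)) * of_real (sqrt (1 - rp\<^sup>2)) = of_real (sqrt (1 - rp'\<^sup>2))"
    using Vq2[of 2] by (simp add: v_def v'_def Uq_v_def)
  note f8 = pos_unit[OF U[OF ua ub] _ _ e8]
  have rr: "rm = rm'" "r0 = r0'" "rp = rp'" using f1(2) f5(2) f6(2) r by auto
  have g: "E * a (-1) * cnj (b 0) = 1" "E * b 1 * cnj (a 0) = 1" "E * b 2 * cnj (a 1) = 1" "b 0 = a 0"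
    using alg_uniq[OF uE ua[of "-2"] ua[of "-1"] ua[of 0] ua[of 1] ub[of "-1"] ub[of 0] ub[of 1] ub[of 2]
       f1(1) f2(1) f3(1) f4(1) f5(1) f6(1) f7(1) f8(1)] r sp by auto
  have e9: "(E * a (-1) * cnj (b 0)) * (cnj (exp (\<i> * of_real m1)) * of_real (sqrt (1 - r0\<^sup>2)))
     = cnj (exp (\<i> * of_real m1')) * of_real (sqrt (1 - r0'\<^sup>2))"
    using Vq2[of 0] by (simp add: v_def v'_def Uq_v_def)
  have "cnj (exp (\<i> * of_real m1)) = cnj (exp (\<i> * of_real m1'))"
    using e9 sp(3) unfolding g(1) rr(2) by simp
  hence mm1: "m1 = m1'" using exp_inj t by (metis complex_cnj_cancel_iff)
  have e10: "(E * b 1 * cnj (a 0)) * (cnj (exp (\<i> * of_real m2)) * of_real (sqrt (1 - r0\<^sup>2)))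
     = cnj (exp (\<i> * of_real m2')) * of_real (sqrt (1 - r0'\<^sup>2))"
    using Wq1[of 0] by (simp add: w_def w'_def Uq_w_def)
  have "cnj (exp (\<i> * of_real m2)) = cnj (exp (\<i> * of_real m2'))"
    using e10 sp(3) unfolding g(2) rr(2) by simp
  hence mm2: "m2 = m2'" using exp_inj t by (metis complex_cnj_cancel_iff)
  have e11: "(E * b 2 * cnj (a 1)) * (cnj (exp (\<i> * of_real m3)) * of_real (sqrt (1 - rp\<^sup>2)))
     = cnj (exp (\<i> * of_real m3')) * of_real (sqrt (1 - rp'\<^sup>2))"
    using Wq1[of 1] by (simp add: w_def w'_def Uq_w_def)
  have "cnj (exp (\<i> * of_real m3)) = cnj (exp (\<i> * of_real m3'))"
    using e11 sp(1) unfolding g(3) rr(3) by simp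
  hence mm3: "m3 = m3'" using exp_inj t by (metis complex_cnj_cancel_iff)
  have hp1: "(exp (\<i> * of_real l') * a 0) * of_real \<alpha> = of_real \<alpha>'"
    using arg_cong[OF HP, of "\<lambda>x. x$1"] by (simp add: Wmv Phiq_def mult.assoc)
  note fa = pos_unit[OF u_mult[OF u_exp ua] _ _ hp1]
  have hp2: "(exp (\<i> * of_real l') * b 0) * (exp (\<i> * of_real \<theta>) * of_real (sqrt (1 - \<alpha>\<^sup>2)))
      = exp (\<i> * of_real \<theta>') * of_real (sqrt (1 - \<alpha>'\<^sup>2))"
    using arg_cong[OF HP, of "\<lambda>x. x$2"] by (simp add: Wmv Phiq_def mult.assoc)
  have aa: "\<alpha> = \<alpha>'" using fa(2) r by auto
  have ea: "exp (\<i> * of_real l') * a 0 = 1" using fa(1) r by auto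
  have "exp (\<i> * of_real \<theta>) * of_real (sqrt (1 - \<alpha>\<^sup>2)) = exp (\<i> * of_real \<theta>') * of_real (sqrt (1 - \<alpha>\<^sup>2))"
    using hp2 unfolding g(4) ea aa by simp
  hence "exp (\<i> * of_real \<theta>) = exp (\<i> * of_real \<theta>')" using sp(7) by simp
  hence tt: "\<theta> = \<theta>'" using exp_inj t by blast
  show ?thesis using rr mm1 mm2 mm3 aa tt by simp
qed


lemma adj_id: "adj (mat 1) = mat 1" by (simp add: vec_eq_iff adj_def mat_def)

lemma ue_refl: "unit_equiv U \<Phi> U \<Phi>"
  unfolding unit_equiv_def
  apply (rule exI[of _ 0], rule exI[of _ 0], rule exI[of _ "\<lambda>_. mat 1"])
  by (simp add: unitary2_def adj_id matrix_mul_lid matrix_mul_rid vec_eq_iff)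

theorem theorem3p2:
  shows "(\<forall>(B::blockop) (\<Phi>::cvec). two_phase_one_defect B \<and> norm \<Phi> = 1 \<longrightarrow>
            (\<exists>rp rm r0 \<alpha> m1 m2 m3 \<theta>.
               0 \<le> rp \<and> rp \<le> 1 \<and> 0 \<le> rm \<and> rm \<le> 1 \<and> 0 \<le> r0 \<and> r0 \<le> 1 \<and>
               0 \<le> \<alpha> \<and> \<alpha> \<le> 1 \<and>
               unit_equiv B \<Phi> (Uq rp rm r0 m1 m2 m3) (Phiq \<alpha> \<theta>)))
       \<and>
         (\<forall>rp rm r0 m1 m2 m3 \<alpha> \<theta> rp' rm' r0' m1' m2' m3' \<alpha>' \<theta>'.
            rp \<in> {0<..<1} \<and> rm \<in> {0<..<1} \<and> r0 \<in> {0<..<1} \<and> \<alpha> \<in> {0<..<1} \<and>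
            rp' \<in> {0<..<1} \<and> rm' \<in> {0<..<1} \<and> r0' \<in> {0<..<1} \<and> \<alpha>' \<in> {0<..<1} \<and>
            m1 \<in> {0..<2*pi} \<and> m2 \<in> {0..<2*pi} \<and> m3 \<in> {0..<2*pi} \<and> \<theta> \<in> {0..<2*pi} \<and>
            m1' \<in> {0..<2*pi} \<and> m2' \<in> {0..<2*pi} \<and> m3' \<in> {0..<2*pi} \<and> \<theta>' \<in> {0..<2*pi} \<longrightarrow>
            (unit_equiv (Uq rp rm r0 m1 m2 m3) (Phiq \<alpha> \<theta>) (Uq rp' rm' r0' m1' m2' m3') (Phiq \<alpha>' \<theta>')
             \<longleftrightarrow> rp = rp' \<and> rm = rm' \<and> r0 = r0' \<and> m1 = m1' \<and> m2 = m2' \<and> m3 = m3' \<and>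
                 \<alpha> = \<alpha>' \<and> \<theta> = \<theta>'))"
proof (rule conjI)
  show "\<forall>(B::blockop) (\<Phi>::cvec). two_phase_one_defect B \<and> norm \<Phi> = 1 \<longrightarrow>
            (\<exists>rp rm r0 \<alpha> m1 m2 m3 \<theta>.
               0 \<le> rp \<and> rp \<le> 1 \<and> 0 \<le> rm \<and> rm \<le> 1 \<and> 0 \<le> r0 \<and> r0 \<le> 1 \<and>
               0 \<le> \<alpha> \<and> \<alpha> \<le> 1 \<and>
               unit_equiv B \<Phi> (Uq rp rm r0 m1 m2 m3) (Phiq \<alpha> \<theta>))"
  proof (intro allI impI)
    fix B \<Phi> assume h: "two_phase_one_defect B \<and> norm (\<Phi>::cvec) = 1"
    show "\<exists>rp rm r0 \<alpha> m1 m2 m3 \<theta>.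
               0 \<le> rp \<and> rp \<le> 1 \<and> 0 \<le> rm \<and> rm \<le> 1 \<and> 0 \<le> r0 \<and> r0 \<le> 1 \<and>
               0 \<le> \<alpha> \<and> \<alpha> \<le> 1 \<and>
               unit_equiv B \<Phi> (Uq rp rm r0 m1 m2 m3) (Phiq \<alpha> \<theta>)"
      using h by (intro part1) auto
  qed
next
  show "\<forall>rp rm r0 m1 m2 m3 \<alpha> \<theta> rp' rm' r0' m1' m2' m3' \<alpha>' \<theta>'.
            rp \<in> {0<..<1} \<and> rm \<in> {0<..<1} \<and> r0 \<in> {0<..<1} \<and> \<alpha> \<in> {0<..<1} \<and>
            rp' \<in> {0<..<1} \<and> rm' \<in> {0<..<1} \<and> r0' \<in> {0<..<1} \<and> \<alpha>' \<in> {0<..<1} \<and>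
            m1 \<in> {0..<2*pi} \<and> m2 \<in> {0..<2*pi} \<and> m3 \<in> {0..<2*pi} \<and> \<theta> \<in> {0..<2*pi} \<and>
            m1' \<in> {0..<2*pi} \<and> m2' \<in> {0..<2*pi} \<and> m3' \<in> {0..<2*pi} \<and> \<theta>' \<in> {0..<2*pi} \<longrightarrow>
            (unit_equiv (Uq rp rm r0 m1 m2 m3) (Phiq \<alpha> \<theta>) (Uq rp' rm' r0' m1' m2' m3') (Phiq \<alpha>' \<theta>')
             \<longleftrightarrow> rp = rp' \<and> rm = rm' \<and> r0 = r0' \<and> m1 = m1' \<and> m2 = m2' \<and> m3 = m3' \<and>
                 \<alpha> = \<alpha>' \<and> \<theta> = \<theta>')"
  proof (intro allI impI)
    fix rp rm r0 m1 m2 m3 \<alpha> \<theta> rp' rm' r0' m1' m2' m3' \<alpha>' \<theta>' :: real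
    assume h: "rp \<in> {0<..<1} \<and> rm \<in> {0<..<1} \<and> r0 \<in> {0<..<1} \<and> \<alpha> \<in> {0<..<1} \<and>
            rp' \<in> {0<..<1} \<and> rm' \<in> {0<..<1} \<and> r0' \<in> {0<..<1} \<and> \<alpha>' \<in> {0<..<1} \<and>
            m1 \<in> {0..<2*pi} \<and> m2 \<in> {0..<2*pi} \<and> m3 \<in> {0..<2*pi} \<and> \<theta> \<in> {0..<2*pi} \<and>
            m1' \<in> {0..<2*pi} \<and> m2' \<in> {0..<2*pi} \<and> m3' \<in> {0..<2*pi} \<and> \<theta>' \<in> {0..<2*pi}"
    show "unit_equiv (Uq rp rm r0 m1 m2 m3) (Phiq \<alpha> \<theta>) (Uq rp' rm' r0' m1' m2' m3') (Phiq \<alpha>' \<theta>')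
             \<longleftrightarrow> rp = rp' \<and> rm = rm' \<and> r0 = r0' \<and> m1 = m1' \<and> m2 = m2' \<and> m3 = m3' \<and>
                 \<alpha> = \<alpha>' \<and> \<theta> = \<theta>'"
    proof
      assume ue: "unit_equiv (Uq rp rm r0 m1 m2 m3) (Phiq \<alpha> \<theta>) (Uq rp' rm' r0' m1' m2' m3') (Phiq \<alpha>' \<theta>')"
      show "rp = rp' \<and> rm = rm' \<and> r0 = r0' \<and> m1 = m1' \<and> m2 = m2' \<and> m3 = m3' \<and> \<alpha> = \<alpha>' \<and> \<theta> = \<theta>'"
        by (rule part2) (use h ue in auto)
    next
      assume "rp = rp' \<and> rm = rm' \<and> r0 = r0' \<and> m1 = m1' \<and> m2 = m2' \<and> m3 = m3' \<and> \<alpha> = \<alpha>' \<and> \<theta> = \<theta>'"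
      thus "unit_equiv (Uq rp rm r0 m1 m2 m3) (Phiq \<alpha> \<theta>) (Uq rp' rm' r0' m1' m2' m3') (Phiq \<alpha>' \<theta>')"
        using ue_refl by simp
    qed
  qed
qed

end
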